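(* Let $a_1,\dots,a_n\in\overline{K}$ ($n\ge2$) be pairwise distinct with $\nu(a_i)>0$ for all $i$ (a bouquet of branches passing through the origin), let $A$ be its associated magic matrix and $(\mathcal R,\gamma)$ its associated tree. Then $A$ induces an automorphism of $F=\{u\in\mathbf{C}^n:\sum_i u_i=0\}$ whose eigenvalues are the strictly positive rational numbers $$\sum_{T\in\mathcal R,\ T\supset T_1}\gamma(T)\,n(T),\qquad T_1\in\mathcal R.$$ If moreover all $a_i\in\mathbf C[[x]]$ (a bouquet of smooth curves through the origin), these eigenvalues are strictly positive integers.
   Context: $\overline{K}=\bigcup_{d\ge1}\mathbf{C}[[x^{1/d}]][1/x]$ with valuation $\nu$. Put $m_{i,j}=\nu(a_i-a_j)$ ($i\ne j$), $m_i=\sum_{j\ne i}m_{i,j}$. The associated magic matrix is $A=(\alpha_{i,j})$ with $\alpha_{i,j}=-m_{i,j}$ for $i\neq j$ and $\alpha_{i,i}=m_i$, viewed as an endomorphism of $\mathbf C^n$ in the canonical basis. Let $T_0=\{1,\dots,n\}$. A subset $T\subset T_0$ is a "rameau" if $|T|\ge2$ and for all $i,j\in T$, $i\ne j$, and $k\notin T$: $m_{i,j}>m_{i,k}=m_{j,k}$; $\mathcal R$ is the set of rameaux (it contains $T_0$, and any two are disjoint or nested). For $T\in\mathcal R$, $\alpha(T)=\inf\{m_{i,j}:i,j\in T,i\ne j\}$; for $T\ne T_0$, $\gamma(T)=\alpha(T)-\alpha(T')$ where $T'$ is the smallest element of $\mathcal R$ strictly containing $T$, and $\gamma(T_0)=\alpha(T_0)$.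 $n(T)$ denotes the cardinality of $T$. *)

theory Defs
  imports "HOL-Analysis.Analysis"
begin

text \<open>Elements of the field of Puiseux series
  K-bar = union over d of C[[x^(1/d)]][1/x] are modelled as their coefficient
  functions: a series sum_q c_q x^q is the function q |-> c_q on the rationals.\<close>

type_synonym puiseux = "rat \<Rightarrow> complex"

definition in_Kbar :: "puiseux \<Rightarrow> bool" where
  "in_Kbar a \<longleftrightarrow> (\<exists>d::nat. d \<ge> 1 \<and> (\<exists>N::int.
      \<forall>q. a q \<noteq> 0 \<longrightarrow> q * of_nat d \<in> \<int> \<and> q \<ge> of_int N))"

definition in_Cxx :: "puiseux \<Rightarrow> bool" where
  "in_Cxx a \<longleftrightarrow> (\<forall>q. a q \<noteq> 0 \<longrightarrow> q \<in> \<int> \<and> q \<ge> 0)"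

definition val :: "puiseux \<Rightarrow> rat" where
  "val a = (LEAST q. a q \<noteq> 0)"

text \<open>nu(a) > 0, with the convention nu(0) = infinity.\<close>
definition val_pos :: "puiseux \<Rightarrow> bool" where
  "val_pos a \<longleftrightarrow> (\<forall>q. a q = 0) \<or> val a > 0"

definition mm :: "('n \<Rightarrow> puiseux) \<Rightarrow> 'n \<Rightarrow> 'n \<Rightarrow> rat" where
  "mm a i j = val (\<lambda>q. a i q - a j q)"

definition mi :: "('n::finite \<Rightarrow> puiseux) \<Rightarrow> 'n \<Rightarrow> rat" where
  "mi a i = (\<Sum>j\<in>UNIV - {i}. mm a i j)"

definition magic_matrix :: "('n::finite \<Rightarrow> puiseux) \<Rightarrow> complex ^'n ^'n" where
  "magic_matrix a = (\<chi> i j. if i = j then of_rat (mi a i) else - of_rat (mm a i j))"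

definition rameaux :: "('n::finite \<Rightarrow> puiseux) \<Rightarrow> 'n set set" where
  "rameaux a = {T. card T \<ge> 2 \<and>
     (\<forall>i\<in>T. \<forall>j\<in>T. \<forall>k. i \<noteq> j \<and> k \<notin> T \<longrightarrow>
        mm a i j > mm a i k \<and> mm a i k = mm a j k)}"

definition alpha :: "('n::finite \<Rightarrow> puiseux) \<Rightarrow> 'n set \<Rightarrow> rat" where
  "alpha a T = Min {mm a i j | i j. i \<in> T \<and> j \<in> T \<and> i \<noteq> j}"

definition parent :: "('n::finite \<Rightarrow> puiseux) \<Rightarrow> 'n set \<Rightarrow> 'n set" where
  "parent a T = (THE T'. T' \<in> rameaux a \<and> T \<subset> T' \<and>
      (\<forall>T''\<in>rameaux a. T \<subset> T'' \<longrightarrow> T' \<subseteq> T''))"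

definition gamma :: "('n::finite \<Rightarrow> puiseux) \<Rightarrow> 'n set \<Rightarrow> rat" where
  "gamma a T = (if T = UNIV then alpha a T else alpha a T - alpha a (parent a T))"

definition tree_value :: "('n::finite \<Rightarrow> puiseux) \<Rightarrow> 'n set \<Rightarrow> rat" where
  "tree_value a T1 = (\<Sum>T\<in>{T\<in>rameaux a. T1 \<subseteq> T}. gamma a T * of_nat (card T))"

definition hypF :: "(complex ^'n::finite) set" where
  "hypF = {u. (\<Sum>i\<in>UNIV. u $ i) = 0}"

end

theory Submission
  imports Defs
begin

lemma Kbar_least:
  assumes K: "in_Kbar b" and bq: "b q \<noteq> 0"
  shows "b (val b) \<noteq> 0 \<and> (\<forall>q'. b q' \<noteq> 0 \<longrightarrow> val b \<le> q')"
proof -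
  obtain d :: nat and N :: int where d: "d \<ge> 1" and H: "\<And>q. b q \<noteq> 0 \<Longrightarrow> q * of_nat d \<in> \<int> \<and> q \<ge> of_int N"
    using K unfolding in_Kbar_def by blast
  define S where "S = {q'. b q' \<noteq> 0 \<and> q' \<le> q}"
  have sub: "S \<subseteq> (\<lambda>k. of_int k / of_nat d) ` {N * int d .. \<lfloor>q * of_nat d\<rfloor>}"
  proof
    fix q' assume "q' \<in> S"
    hence b': "b q' \<noteq> 0" and le: "q' \<le> q" by (auto simp: S_def)
    from H[OF b'] obtain k where k: "q' * of_nat d = of_int k" and N: "q' \<ge> of_int N"
      by (auto elim!: Ints_cases)
    have dpos: "(0::rat) < of_nat d" using d by simp
    have q'eq: "q' = of_int k / of_nat d" using k dpos by (simp add: field_simps)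
    have "of_int (N * int d) \<le> (of_int k :: rat)"
      unfolding k[symmetric] using N dpos by (simp add: mult_right_mono)
    hence "N * int d \<le> k" by linarith
    moreover have "of_int k \<le> q * of_nat d" using k le dpos by (metis mult_right_mono less_imp_le)
    hence "k \<le> \<lfloor>q * of_nat d\<rfloor>" by (simp add: le_floor_iff)
    ultimately show "q' \<in> (\<lambda>k. of_int k / of_nat d) ` {N * int d .. \<lfloor>q * of_nat d\<rfloor>}"
      using q'eq by auto
  qed
  have fin: "finite S" by (rule finite_subset[OF sub]) auto
  have qS: "q \<in> S" using bq by (simp add: S_def)
  define q0 where "q0 = Min S"
  have q0S: "q0 \<in> S" using fin qS unfolding q0_def by (metis Min_in empty_iff)
  have least: "\<forall>q'. b q' \<noteq> 0 \<longrightarrow> q0 \<le> q'"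
  proof (intro allI impI)
    fix q' assume "b q' \<noteq> 0"
    show "q0 \<le> q'"
    proof (cases "q' \<le> q")
      case True thus ?thesis using \<open>b q' \<noteq> 0\<close> fin unfolding q0_def by (simp add: S_def)
    next
      case False thus ?thesis using q0S by (simp add: S_def)
    qed
  qed
  have "val b = q0" unfolding val_def
    by (rule Least_equality) (use q0S least in \<open>auto simp: S_def\<close>)
  thus ?thesis using q0S least by (simp add: S_def)
qed

lemma Kbar_diff:
  assumes "in_Kbar b" "in_Kbar c" shows "in_Kbar (\<lambda>q. b q - c q)"
proof -
  obtain d1 :: nat and N1 :: int where d1: "d1 \<ge> 1" and H1: "\<And>q. b q \<noteq> 0 \<Longrightarrow> q * of_nat d1 \<in> \<int> \<and> q \<ge> of_int N1"
    using assms(1) unfolding in_Kbar_def by blast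
  obtain d2 :: nat and N2 :: int where d2: "d2 \<ge> 1" and H2: "\<And>q. c q \<noteq> 0 \<Longrightarrow> q * of_nat d2 \<in> \<int> \<and> q \<ge> of_int N2"
    using assms(2) unfolding in_Kbar_def by blast
  have "d1 * d2 \<ge> 1" using d1 d2 by (simp add: one_le_mult_iff)
  moreover have "\<forall>q. b q - c q \<noteq> 0 \<longrightarrow> q * of_nat (d1*d2) \<in> \<int> \<and> q \<ge> of_int (min N1 N2)"
  proof (intro allI impI)
    fix q assume "b q - c q \<noteq> 0"
    hence "b q \<noteq> 0 \<or> c q \<noteq> 0" by auto
    thus "q * of_nat (d1*d2) \<in> \<int> \<and> q \<ge> of_int (min N1 N2)"
    proof
      assume "b q \<noteq> 0" with H1 have "q * of_nat d1 \<in> \<int>" "q \<ge> of_int N1" by auto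
      thus ?thesis by (auto simp: mult.assoc[symmetric] Ints_mult)
    next
      assume "c q \<noteq> 0" with H2 have "q * of_nat d2 \<in> \<int>" "q \<ge> of_int N2" by auto
      hence "q * of_nat d2 * of_nat d1 \<in> \<int>" "q \<ge> of_int N2" by (auto simp: Ints_mult)
      thus ?thesis by (auto simp: mult_ac)
    qed
  qed
  ultimately show ?thesis unfolding in_Kbar_def by blast
qed

lemma lin_surj:
  fixes f :: "'a::euclidean_space \<Rightarrow> 'a"
  assumes "linear f" "subspace S" "f ` S \<subseteq> S" "inj_on f S"
  shows "f ` S = S"
proof -
  have "dim (f ` S) = dim S"
    using assms by (metis dim_image_eq span_eq_iff)
  moreover have "subspace (f ` S)" using assms linear_subspace_image by blast
  ultimately show ?thesis using assms subspace_dim_equal by (metis order_refl)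
qed

locale bouquet =
  fixes a :: "'n::finite \<Rightarrow> puiseux"
  assumes n2: "CARD('n) \<ge> 2"
    and inK: "\<And>i. in_Kbar (a i)"
    and distinct: "inj a"
    and pos: "\<And>i. val_pos (a i)"
begin

abbreviation m where "m \<equiv> mm a"

lemma mm_attained:
  assumes "i \<noteq> j"
  shows "a i (m i j) - a j (m i j) \<noteq> 0 \<and> (\<forall>q. a i q - a j q \<noteq> 0 \<longrightarrow> m i j \<le> q)"
proof -
  have "a i \<noteq> a j" using distinct assms by (meson injD)
  then obtain q where "a i q \<noteq> a j q" by auto
  hence "(\<lambda>q. a i q - a j q) q \<noteq> 0" by simp
  from Kbar_least[OF Kbar_diff[OF inK inK] this] show ?thesis
    unfolding mm_def by simp
qed

lemma mm_sym: "m i j = m j i"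
proof -
  have "(\<lambda>q. a i q - a j q \<noteq> 0) = (\<lambda>q. a j q - a i q \<noteq> 0)"
    by (auto simp: fun_eq_iff)
  thus ?thesis unfolding mm_def val_def by simp
qed

lemma supp_pos: "a i q \<noteq> 0 \<Longrightarrow> q > 0"
proof -
  assume h: "a i q \<noteq> 0"
  with pos[of i] have "val (a i) > 0" unfolding val_pos_def by auto
  moreover have "val (a i) \<le> q" using Kbar_least[OF inK h] h by blast
  ultimately show "q > 0" by simp
qed

lemma mm_pos: "i \<noteq> j \<Longrightarrow> m i j > 0"
  using mm_attained[of i j] supp_pos[of i "m i j"] supp_pos[of j "m i j"] by force

lemma mm_ultra:
  assumes "i \<noteq> j" "j \<noteq> k" "i \<noteq> k"
  shows "min (m i j) (m j k) \<le> m i k"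
proof -
  from mm_attained[OF assms(3)] have "a i (m i k) - a k (m i k) \<noteq> 0" by blast
  hence "a i (m i k) - a j (m i k) \<noteq> 0 \<or> a j (m i k) - a k (m i k) \<noteq> 0" by auto
  thus ?thesis using mm_attained[OF assms(1)] mm_attained[OF assms(2)] by force
qed

lemma mm_int: "(\<forall>i. in_Cxx (a i)) \<Longrightarrow> i \<noteq> j \<Longrightarrow> m i j \<in> \<int>"
  using mm_attained[of i j] unfolding in_Cxx_def
  by (metis diff_zero eq_iff_diff_eq_0)

lemma ram_card: "T \<in> rameaux a \<Longrightarrow> card T \<ge> 2"
  by (simp add: rameaux_def)

lemma ram_prop: "T \<in> rameaux a \<Longrightarrow> i \<in> T \<Longrightarrow> j \<in> T \<Longrightarrow> i \<noteq> j \<Longrightarrow> k \<notin> T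
   \<Longrightarrow> m i j > m i k \<and> m i k = m j k"
  unfolding rameaux_def by blast

lemma UNIV_ram: "UNIV \<in> rameaux a"
  using n2 unfolding rameaux_def by simp

lemma nested:
  assumes R: "R \<in> rameaux a" and S: "S \<in> rameaux a" and x: "x \<in> R" "x \<in> S"
  shows "R \<subseteq> S \<or> S \<subseteq> R"
proof (rule ccontr)
  assume "\<not> (R \<subseteq> S \<or> S \<subseteq> R)"
  then obtain r s where r: "r \<in> R" "r \<notin> S" and s: "s \<in> S" "s \<notin> R" by auto
  have "x \<noteq> s" using x s by auto
  have "x \<noteq> r" using x r by auto
  from ram_prop[OF S x(2) s(1) \<open>x \<noteq> s\<close> r(2)] have "m x s > m x r" by blast
  moreover from ram_prop[OF R x(1) r(1) \<open>x \<noteq> r\<close> s(2)] have "m x r > m x s" by blast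
  ultimately show False by simp
qed

lemma fin_pairs: "finite {m i j | i j. i \<in> T \<and> j \<in> T \<and> i \<noteq> j}"
proof -
  have "{m i j | i j. i \<in> T \<and> j \<in> T \<and> i \<noteq> j} \<subseteq> (\<lambda>(i,j). m i j) ` UNIV" by auto
  thus ?thesis by (rule finite_subset) simp
qed

lemma alpha_le: "i \<in> T \<Longrightarrow> j \<in> T \<Longrightarrow> i \<noteq> j \<Longrightarrow> alpha a T \<le> m i j"
  unfolding alpha_def by (rule Min_le[OF fin_pairs]) blast

lemma two_elems: "card (T::'n set) \<ge> 2 \<Longrightarrow> \<exists>x\<in>T. \<exists>y\<in>T. x \<noteq> y"
proof (rule ccontr)
  assume "card T \<ge> 2" "\<not> (\<exists>x\<in>T. \<exists>y\<in>T. x \<noteq> y)"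
  hence "card T \<le> Suc 0" by (subst card_le_Suc0_iff_eq) auto
  thus False using \<open>card T \<ge> 2\<close> by simp
qed

lemma alpha_attained: "card T \<ge> 2 \<Longrightarrow> \<exists>x\<in>T. \<exists>y\<in>T. x \<noteq> y \<and> alpha a T = m x y"
proof -
  assume "card T \<ge> 2"
  then obtain x y where "x \<in> T" "y \<in> T" "x \<noteq> y" using two_elems by blast
  hence ne: "{m i j | i j. i \<in> T \<and> j \<in> T \<and> i \<noteq> j} \<noteq> {}" by blast
  have "alpha a T \<in> {m i j | i j. i \<in> T \<and> j \<in> T \<and> i \<noteq> j}"
    unfolding alpha_def by (rule Min_in[OF fin_pairs ne])
  thus ?thesis by blast
qed

lemma alpha_pos: "card T \<ge> 2 \<Longrightarrow> alpha a T > 0"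
  using alpha_attained mm_pos by force

definition cls where "cls T x = {j \<in> T. j = x \<or> alpha a T < m x j}"

lemma rel_trans:
  assumes "x = y \<or> al < m x y" "y = z \<or> al < m y z"
  shows "x = z \<or> al < m x z"
proof (cases "x = y \<or> y = z \<or> x = z")
  case True thus ?thesis using assms by auto
next
  case False
  hence "min (m x y) (m y z) \<le> m x z" using mm_ultra by blast
  thus ?thesis using assms False by auto
qed

lemma rel_sym: "x = y \<or> al < m x y \<Longrightarrow> y = x \<or> al < m y x"
  using mm_sym by metis

lemma cls_sub: "cls T x \<subseteq> T" by (auto simp: cls_def)
lemma cls_self: "x \<in> T \<Longrightarrow> x \<in> cls T x" by (auto simp: cls_def)

lemma cls_iff: "i \<in> T \<Longrightarrow> j \<in> T \<Longrightarrow> alpha a T < m i j \<Longrightarrow> (i \<in> cls T x \<longleftrightarrow> j \<in> cls T x)"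
  unfolding cls_def using rel_trans rel_sym by blast

lemma cls_out: "i \<in> cls T x \<Longrightarrow> j \<in> T \<Longrightarrow> j \<notin> cls T x \<Longrightarrow> m i j = alpha a T"
proof -
  assume i: "i \<in> cls T x" and j: "j \<in> T" "j \<notin> cls T x"
  have iT: "i \<in> T" using i cls_sub by blast
  have "i \<noteq> j" using i j by auto
  have "\<not> alpha a T < m i j" using cls_iff[OF iT j(1)] i j by blast
  moreover have "alpha a T \<le> m i j" using alpha_le[OF iT j(1) \<open>i \<noteq> j\<close>] .
  ultimately show ?thesis by simp
qed

lemma cls_ne: "card T \<ge> 2 \<Longrightarrow> x \<in> T \<Longrightarrow> cls T x \<noteq> T"
proof
  assume "card T \<ge> 2" "x \<in> T" "cls T x = T"
  then obtain p q where pq: "p \<in> T" "q \<in> T" "p \<noteq> q" "alpha a T = m p q"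
    using alpha_attained by blast
  have "p \<in> cls T x" "q \<in> cls T x" using pq \<open>cls T x = T\<close> by auto
  hence "x = p \<or> alpha a T < m x p" "x = q \<or> alpha a T < m x q" unfolding cls_def by auto
  hence "p = x \<or> alpha a T < m p x" "x = q \<or> alpha a T < m x q" using rel_sym by blast+
  hence "p = q \<or> alpha a T < m p q" by (rule rel_trans)
  thus False using pq by simp
qed

lemma cls_psub: "card T \<ge> 2 \<Longrightarrow> x \<in> T \<Longrightarrow> cls T x \<subset> T"
  using cls_ne cls_sub by blast

lemma cls_ram:
  assumes T: "T \<in> rameaux a" and x: "x \<in> T" and c2: "card (cls T x) \<ge> 2"
  shows "cls T x \<in> rameaux a"
proof -
 have "\<forall>i\<in>cls T x. \<forall>j\<in>cls T x. \<forall>k. i \<noteq> j \<and> k \<notin> cls T x \<longrightarrow> m i j > m i k \<and> m i k = m j k"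
 proof (intro ballI allI impI)
  fix i j k assume i: "i \<in> cls T x" and j: "j \<in> cls T x" and h: "i \<noteq> j \<and> k \<notin> cls T x"
  have iT: "i \<in> T" and jT: "j \<in> T" using i j cls_sub by auto
  have "alpha a T < m i j"
    using i j h rel_trans rel_sym unfolding cls_def by blast
  show "m i k < m i j \<and> m i k = m j k"
  proof (cases "k \<in> T")
    case True
    thus ?thesis using cls_out[OF i True] cls_out[OF j True] h \<open>alpha a T < m i j\<close> by simp
  next
    case False
    thus ?thesis using ram_prop[OF T iT jT _ False] h by blast
  qed
 qed
 thus ?thesis using c2 unfolding rameaux_def by blast
qed


lemma parent_props:
  assumes T: "T \<in> rameaux a" and TU: "T \<noteq> UNIV"
  shows "parent a T \<in> rameaux a \<and> T \<subset> parent a T \<and>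
         (\<forall>T''\<in>rameaux a. T \<subset> T'' \<longrightarrow> parent a T \<subseteq> T'')"
proof -
  define Q where "Q = {T''\<in>rameaux a. T \<subset> T''}"
  have UQ: "UNIV \<in> Q" using UNIV_ram TU by (auto simp: Q_def)
  have finQ: "finite Q" by simp
  define c where "c = Min (card ` Q)"
  have "c \<in> card ` Q" unfolding c_def using UQ finQ by (intro Min_in) auto
  then obtain P where PQ: "P \<in> Q" and cP: "card P = c" by auto
  have cmin: "\<And>P'. P' \<in> Q \<Longrightarrow> card P \<le> card P'" unfolding cP c_def using finQ by simp
  obtain x where x: "x \<in> T" using ram_card[OF T] two_elems by blast
  have Pmin: "\<forall>T''\<in>rameaux a. T \<subset> T'' \<longrightarrow> P \<subseteq> T''"
  proof (intro ballI impI)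
    fix T'' assume T'': "T'' \<in> rameaux a" "T \<subset> T''"
    have PR: "P \<in> rameaux a" "T \<subset> P" using PQ by (auto simp: Q_def)
    from nested[OF PR(1) T''(1), of x] x PR(2) T''(2)
    have "P \<subseteq> T'' \<or> T'' \<subseteq> P" by blast
    moreover have "\<not> T'' \<subset> P"
    proof
      assume "T'' \<subset> P"
      hence "card T'' < card P" by (simp add: psubset_card_mono)
      moreover have "T'' \<in> Q" using T'' by (simp add: Q_def)
      ultimately show False using cmin by fastforce
    qed
    ultimately show "P \<subseteq> T''" by blast
  qed
  have PR: "P \<in> rameaux a" "T \<subset> P" using PQ by (auto simp: Q_def)
  have "parent a T = P" unfolding parent_def
  proof (rule the_equality)
    show "P \<in> rameaux a \<and> T \<subset> P \<and> (\<forall>T''\<in>rameaux a. T \<subset> T'' \<longrightarrow> P \<subseteq> T'')"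
      using PR Pmin by blast
  next
    fix P' assume "P' \<in> rameaux a \<and> T \<subset> P' \<and> (\<forall>T''\<in>rameaux a. T \<subset> T'' \<longrightarrow> P' \<subseteq> T'')"
    thus "P' = P" using PR Pmin by blast
  qed
  thus ?thesis using PR Pmin by simp
qed

lemma cls_parent:
  assumes T: "T \<in> rameaux a" and TU: "T \<noteq> UNIV" and i: "i \<in> T"
  shows "cls (parent a T) i = T"
proof -
  let ?P = "parent a T"
  have P: "?P \<in> rameaux a" "T \<subset> ?P" "\<forall>T''\<in>rameaux a. T \<subset> T'' \<longrightarrow> ?P \<subseteq> T''"
    using parent_props[OF T TU] by auto
  obtain k where k: "k \<in> ?P" "k \<notin> T" using P(2) by blast
  have iP: "i \<in> ?P" using i P(2) by blast
  have sub: "T \<subseteq> cls ?P i"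
  proof
    fix j assume j: "j \<in> T"
    show "j \<in> cls ?P i"
    proof (cases "j = i")
      case True thus ?thesis using iP by (simp add: cls_self)
    next
      case False
      have "m i j > m i k" using ram_prop[OF T i j _ k(2)] False by auto
      moreover have "alpha a ?P \<le> m i k" using alpha_le[OF iP k(1)] k i by blast
      ultimately show ?thesis using j P(2) by (auto simp: cls_def)
    qed
  qed
  show ?thesis
  proof (rule ccontr)
    assume "cls ?P i \<noteq> T"
    hence psub: "T \<subset> cls ?P i" using sub by blast
    hence "card T < card (cls ?P i)" by (simp add: psubset_card_mono)
    hence "card (cls ?P i) \<ge> 2" using ram_card[OF T] by simp
    hence "cls ?P i \<in> rameaux a" using cls_ram[OF P(1) iP] by simp
    hence "?P \<subseteq> cls ?P i" using P(3) psub by blast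
    thus False using cls_psub[OF ram_card[OF P(1)] iP] by blast
  qed
qed

lemma tv_formula:
  assumes T: "T \<in> rameaux a" and i: "i \<in> T"
  shows "tree_value a T = of_nat (card T) * alpha a T + (\<Sum>j\<in>-T. m i j)"
  using T i
proof (induction "card (UNIV - T)" arbitrary: T i rule: less_induct)
  case less
  show ?case
  proof (cases "T = UNIV")
    case True
    have "{T' \<in> rameaux a. T \<subseteq> T'} = {UNIV}" using True UNIV_ram by auto
    thus ?thesis using True by (simp add: tree_value_def gamma_def)
  next
    case False
    let ?P = "parent a T"
    have P: "?P \<in> rameaux a" "T \<subset> ?P" "\<forall>T''\<in>rameaux a. T \<subset> T'' \<longrightarrow> ?P \<subseteq> T''"
      using parent_props[OF less.prems(1) False] by auto
    have iP: "i \<in> ?P" using less.prems(2) P(2) by blast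
    have "UNIV - ?P \<subset> UNIV - T" using P(2) by blast
    hence lt: "card (UNIV - ?P) < card (UNIV - T)" by (simp add: psubset_card_mono)
    have IH: "tree_value a ?P = of_nat (card ?P) * alpha a ?P + (\<Sum>j\<in>-?P. m i j)"
      using less.hyps[OF lt P(1) iP] .
    have seteq: "{T' \<in> rameaux a. T \<subseteq> T'} = insert T {T' \<in> rameaux a. ?P \<subseteq> T'}"
      using P less.prems(1) by blast
    have Tnot: "T \<notin> {T' \<in> rameaux a. ?P \<subseteq> T'}" using P(2) by blast
    have tvT: "tree_value a T = gamma a T * of_nat (card T) + tree_value a ?P"
      unfolding tree_value_def seteq using Tnot by (simp add: sum.insert)
    have gT: "gamma a T = alpha a T - alpha a ?P" using False by (simp add: gamma_def)
    have out: "\<And>j. j \<in> ?P - T \<Longrightarrow> m i j = alpha a ?P"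
      using cls_out[of i ?P i] cls_parent[OF less.prems(1) False less.prems(2)]
        cls_self[OF iP] by auto
    have split: "-T = -?P \<union> (?P - T)" using P(2) by blast
    have "(\<Sum>j\<in>-T. m i j) = (\<Sum>j\<in>-?P. m i j) + (\<Sum>j\<in>?P - T. m i j)"
      unfolding split by (rule sum.union_disjoint) auto
    also have "(\<Sum>j\<in>?P - T. m i j) = of_nat (card (?P - T)) * alpha a ?P"
      using out by simp
    finally have s: "(\<Sum>j\<in>-T. m i j) = (\<Sum>j\<in>-?P. m i j) + of_nat (card (?P - T)) * alpha a ?P" .
    have "card ?P = card T + card (?P - T)"
      using P(2) by (metis card_Un_disjoint Diff_disjoint Un_Diff_cancel finite le_iff_sup psubset_imp_subset)
    hence cP: "(of_nat (card ?P)::rat) = of_nat (card T) + of_nat (card (?P - T))" by simp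
    show ?thesis unfolding tvT gT IH s cP by (simp add: algebra_simps)
  qed
qed

lemma tv_pos: "T \<in> rameaux a \<Longrightarrow> tree_value a T > 0"
proof -
  assume T: "T \<in> rameaux a"
  obtain i where i: "i \<in> T" using ram_card[OF T] two_elems by blast
  have "alpha a T > 0" using alpha_pos ram_card[OF T] by blast
  moreover have "card T > 0" using ram_card[OF T] by simp
  ultimately have "of_nat (card T) * alpha a T > 0" by simp
  moreover have "(\<Sum>j\<in>-T. m i j) \<ge> 0"
  proof (rule sum_nonneg)
    fix j assume "j \<in> -T" hence "i \<noteq> j" using i by auto
    thus "0 \<le> m i j" using mm_pos[of i j] by simp
  qed
  ultimately show ?thesis using tv_formula[OF T i] by simp
qed

lemma tv_int: "(\<forall>i. in_Cxx (a i)) \<Longrightarrow> T \<in> rameaux a \<Longrightarrow> tree_value a T \<in> \<int>"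
proof -
  assume C: "\<forall>i. in_Cxx (a i)" and T: "T \<in> rameaux a"
  obtain i where i: "i \<in> T" using ram_card[OF T] two_elems by blast
  obtain x y where "x \<noteq> y" "alpha a T = m x y" using alpha_attained ram_card[OF T] by blast
  hence "alpha a T \<in> \<int>" using mm_int[OF C] by simp
  moreover have "(\<Sum>j\<in>-T. m i j) \<in> \<int>"
  proof (rule Ints_sum)
    fix j assume "j \<in> -T" hence "i \<noteq> j" using i by auto
    thus "m i j \<in> \<int>" using mm_int[OF C] by simp
  qed
  ultimately show ?thesis using tv_formula[OF T i] by simp
qed


lemma Mv: "(magic_matrix a *v v) $ i = (\<Sum>j\<in>UNIV-{i}. of_rat (m i j) * (v$i - v$j))"
proof -
  have "(magic_matrix a *v v) $ i = (\<Sum>j\<in>UNIV. magic_matrix a $ i $ j * v $ j)"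
    by (simp add: matrix_vector_mult_def)
  also have "\<dots> = magic_matrix a $ i $ i * v $ i + (\<Sum>j\<in>UNIV-{i}. magic_matrix a $ i $ j * v $ j)"
    by (simp add: sum.remove)
  also have "\<dots> = of_rat (mi a i) * v $ i - (\<Sum>j\<in>UNIV-{i}. of_rat (m i j) * v $ j)"
    by (simp add: magic_matrix_def sum_negf)
  also have "of_rat (mi a i) = (\<Sum>j\<in>UNIV-{i}. (of_rat (m i j) :: complex))"
    by (simp add: mi_def of_rat_sum)
  finally show ?thesis
    by (simp add: sum_distrib_right right_diff_distrib sum_subtractf)
qed

lemma Msym: "magic_matrix a $ i $ j = magic_matrix a $ j $ i"
  by (simp add: magic_matrix_def mm_sym)

lemma M_hyp: assumes "u \<in> hypF" shows "magic_matrix a *v u \<in> hypF"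
proof -
  have row0: "(\<Sum>i\<in>UNIV. magic_matrix a $ j $ i) = 0" for j
  proof -
    have "(magic_matrix a *v (\<chi> k. 1)) $ j = 0" by (simp add: Mv)
    thus ?thesis by (simp add: matrix_vector_mult_def)
  qed
  have "(\<Sum>i\<in>UNIV. (magic_matrix a *v u) $ i) = (\<Sum>i\<in>UNIV. \<Sum>j\<in>UNIV. magic_matrix a $ i $ j * u $ j)"
    by (simp add: matrix_vector_mult_def)
  also have "\<dots> = (\<Sum>j\<in>UNIV. \<Sum>i\<in>UNIV. magic_matrix a $ i $ j * u $ j)"
    by (rule sum.swap)
  also have "\<dots> = (\<Sum>j\<in>UNIV. (\<Sum>i\<in>UNIV. magic_matrix a $ j $ i) * u $ j)"
    by (simp add: sum_distrib_right Msym)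
  also have "\<dots> = 0" by (simp add: row0)
  finally show ?thesis by (simp add: hypF_def)
qed

lemma orth:
  assumes u: "magic_matrix a *v u = c *s u" and w: "magic_matrix a *v w = l *s w" and cl: "c \<noteq> l"
  shows "(\<Sum>j\<in>UNIV. w$j * u$j) = 0"
proof -
  have "(\<Sum>i\<in>UNIV. w$i * (magic_matrix a *v u)$i) = (\<Sum>i\<in>UNIV. \<Sum>j\<in>UNIV. w$i * magic_matrix a $ i $ j * u $ j)"
    by (simp add: matrix_vector_mult_def sum_distrib_left mult.assoc)
  also have "\<dots> = (\<Sum>j\<in>UNIV. \<Sum>i\<in>UNIV. w$i * magic_matrix a $ i $ j * u $ j)"
    by (rule sum.swap)
  also have "\<dots> = (\<Sum>j\<in>UNIV. (magic_matrix a *v w)$j * u$j)"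
    by (simp add: matrix_vector_mult_def sum_distrib_left sum_distrib_right Msym mult_ac)
  finally have "c * (\<Sum>j\<in>UNIV. w$j * u$j) = l * (\<Sum>j\<in>UNIV. w$j * u$j)"
    unfolding u w by (simp add: sum_distrib_left mult_ac)
  thus ?thesis using cl by simp
qed

lemma eig:
  assumes T: "T \<in> rameaux a" and supp: "\<And>j. j \<notin> T \<Longrightarrow> v$j = 0"
    and s0: "(\<Sum>j\<in>UNIV. v$j) = 0"
    and const: "\<And>i j. i \<in> T \<Longrightarrow> j \<in> T \<Longrightarrow> alpha a T < m i j \<Longrightarrow> v$i = v$j"
  shows "magic_matrix a *v v = of_rat (tree_value a T) *s v"
proof (subst vec_eq_iff, intro allI)
  fix i
  have sT: "(\<Sum>j\<in>T. v$j) = 0"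
    using s0 supp by (metis (no_types, lifting) sum.mono_neutral_left finite subset_UNIV UNIV_I DiffE)
  show "(magic_matrix a *v v) $ i = (of_rat (tree_value a T) *s v) $ i"
  proof (cases "i \<in> T")
    case True
    have split: "UNIV - {i} = -T \<union> (T - {i})" using True by blast
    have "(\<Sum>j\<in>UNIV-{i}. of_rat (m i j) * (v$i - v$j))
        = (\<Sum>j\<in>-T. of_rat (m i j) * (v$i - v$j)) + (\<Sum>j\<in>T-{i}. of_rat (m i j) * (v$i - v$j))"
      unfolding split by (rule sum.union_disjoint) auto
    also have "(\<Sum>j\<in>-T. of_rat (m i j) * (v$i - v$j)) = (\<Sum>j\<in>-T. of_rat (m i j)) * v$i"
      using supp by (simp add: sum_distrib_right)
    also have "(\<Sum>j\<in>T-{i}. of_rat (m i j) * (v$i - v$j)) = (\<Sum>j\<in>T-{i}. of_rat (alpha a T) * (v$i - v$j))"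
    proof (rule sum.cong)
      fix j assume j: "j \<in> T - {i}"
      show "of_rat (m i j) * (v$i - v$j) = of_rat (alpha a T) * (v$i - v$j)"
      proof (cases "alpha a T < m i j")
        case True thus ?thesis using const[OF \<open>i \<in> T\<close>, of j] j by simp
      next
        case False
        hence "m i j = alpha a T" using alpha_le[OF \<open>i \<in> T\<close>, of j] j by force
        thus ?thesis by simp
      qed
    qed simp
    also have "\<dots> = (\<Sum>j\<in>T. of_rat (alpha a T) * (v$i - v$j))"
      using True by (simp add: sum.remove)
    also have "\<dots> = of_rat (alpha a T) * (of_nat (card T) * v$i)"
      by (simp add: sum_distrib_left[symmetric] sum_subtractf sT)
    finally have "(magic_matrix a *v v) $ i = ((\<Sum>j\<in>-T. of_rat (m i j)) + of_rat (alpha a T) * of_nat (card T)) * v$i"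
      unfolding Mv by (simp add: algebra_simps)
    also have "(\<Sum>j\<in>-T. of_rat (m i j)) + of_rat (alpha a T) * of_nat (card T) = (of_rat (tree_value a T) :: complex)"
      unfolding tv_formula[OF T True] by (simp add: of_rat_add of_rat_mult of_rat_sum mult_ac)
    finally show ?thesis by simp
  next
    case False
    obtain x0 where x0: "x0 \<in> T" using ram_card[OF T] two_elems by blast
    have mc: "\<And>j. j \<in> T \<Longrightarrow> m i j = m i x0"
    proof -
      fix j assume j: "j \<in> T"
      show "m i j = m i x0"
      proof (cases "j = x0")
        case False
        thus ?thesis using ram_prop[OF T j x0 False \<open>i \<notin> T\<close>] mm_sym by metis
      qed simp
    qed
    have "(\<Sum>j\<in>UNIV-{i}. of_rat (m i j) * (v$i - v$j)) = (\<Sum>j\<in>T. of_rat (m i j) * (v$i - v$j))"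
      using False supp by (intro sum.mono_neutral_right) auto
    also have "\<dots> = (\<Sum>j\<in>T. of_rat (m i x0) * (- v$j))"
      using False supp mc by (intro sum.cong) auto
    also have "\<dots> = 0" by (simp add: sum_distrib_left[symmetric] sum_negf sT)
    finally show ?thesis unfolding Mv using supp[OF False] by simp
  qed
qed


lemma sum_ind: "(\<Sum>j\<in>UNIV. (if j \<in> (A::'n set) then c else 0) * f j) = c * (\<Sum>j\<in>A. f j :: complex)"
proof -
  have "(\<Sum>j\<in>UNIV. (if j \<in> A then c else 0) * f j) = (\<Sum>j\<in>UNIV. if j \<in> A then c * f j else 0)"
    by (rule sum.cong) auto
  also have "\<dots> = (\<Sum>j\<in>A. c * f j)" by (rule sum.mono_neutral_cong_right) auto
  finally show ?thesis by (simp add: sum_distrib_left)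
qed

definition wv :: "'n set \<Rightarrow> 'n \<Rightarrow> complex ^ 'n" where
  "wv T x = (\<chi> j. (if j \<in> cls T x then of_nat (card T) else 0) - (if j \<in> T then of_nat (card (cls T x)) else 0))"

lemma wv_dot: "(\<Sum>j\<in>UNIV. wv T x $ j * u $ j)
   = of_nat (card T) * (\<Sum>j\<in>cls T x. u$j) - of_nat (card (cls T x)) * (\<Sum>j\<in>T. u$j)"
  by (simp add: wv_def left_diff_distrib sum_subtractf sum_ind)

lemma wv_props:
  assumes T: "T \<in> rameaux a" and x: "x \<in> T"
  shows "wv T x \<in> hypF" "wv T x \<noteq> 0" "magic_matrix a *v wv T x = of_rat (tree_value a T) *s wv T x"
proof -
  have s0: "(\<Sum>j\<in>UNIV. wv T x $ j) = 0"
    using wv_dot[of T x "\<chi> j. 1"] cls_sub[of T x] by (simp add: Int_absorb2)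
  show "wv T x \<in> hypF" using s0 by (simp add: hypF_def)
  have "cls T x \<subset> T" using cls_psub[OF ram_card[OF T] x] .
  hence "card (cls T x) < card T" by (simp add: psubset_card_mono)
  hence "wv T x $ x \<noteq> 0" using cls_self[OF x] x by (simp add: wv_def)
  thus "wv T x \<noteq> 0" by auto
  show "magic_matrix a *v wv T x = of_rat (tree_value a T) *s wv T x"
  proof (rule eig[OF T _ s0])
    fix j assume "j \<notin> T" thus "wv T x $ j = 0" using cls_sub[of T x] by (auto simp: wv_def)
  next
    fix i j assume "i \<in> T" "j \<in> T" "alpha a T < m i j"
    thus "wv T x $ i = wv T x $ j" using cls_iff[of i T j x] by (simp add: wv_def)
  qed
qed

lemma eigen_sub:
  assumes u: "u \<in> hypF" "u \<noteq> 0" and eq: "magic_matrix a *v u = c *s u"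
  shows "c \<in> (\<lambda>T1. of_rat (tree_value a T1)) ` rameaux a"
proof (rule ccontr)
  assume nc: "c \<notin> (\<lambda>T1. of_rat (tree_value a T1)) ` rameaux a"
  define S where "S A = (\<Sum>j\<in>A. u$j)" for A
  have orthT: "of_nat (card T) * S (cls T x) = of_nat (card (cls T x)) * S T"
    if T: "T \<in> rameaux a" and x: "x \<in> T" for T x
  proof -
    have "c \<noteq> of_rat (tree_value a T)" using nc T by blast
    from orth[OF eq wv_props(3)[OF T x] this]
    show ?thesis unfolding wv_dot S_def by simp
  qed
  have S0: "S T = 0" if T: "T \<in> rameaux a" for T
    using T
  proof (induction "card (UNIV - T)" arbitrary: T rule: less_induct)
    case less
    show ?case
    proof (cases "T = UNIV")
      case True thus ?thesis using u(1) by (simp add: S_def hypF_def)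
    next
      case False
      let ?P = "parent a T"
      have P: "?P \<in> rameaux a" "T \<subset> ?P"
        using parent_props[OF less.prems(1) False] by auto
      have "UNIV - ?P \<subset> UNIV - T" using P(2) by blast
      hence lt: "card (UNIV - ?P) < card (UNIV - T)" by (simp add: psubset_card_mono)
      have SP: "S ?P = 0" using less.hyps[OF lt P(1)] .
      obtain i where i: "i \<in> T" using ram_card[OF less.prems(1)] two_elems by blast
      have iP: "i \<in> ?P" using i P(2) by blast
      have "of_nat (card ?P) * S T = 0"
        using orthT[OF P(1) iP] cls_parent[OF less.prems(1) False i] SP by simp
      moreover have "card ?P \<noteq> 0" using ram_card[OF P(1)] by linarith
      ultimately show ?thesis by simp
    qed
  qed
  have "u $ i = 0" for i
  proof -
    define Q where "Q = {T\<in>rameaux a. i \<in> T}"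
    have UQ: "UNIV \<in> Q" using UNIV_ram by (simp add: Q_def)
    define c0 where "c0 = Min (card ` Q)"
    have "c0 \<in> card ` Q" unfolding c0_def using UQ by (intro Min_in) auto
    then obtain T where TQ: "T \<in> Q" and cT: "card T = c0" by auto
    have cmin: "\<And>T'. T' \<in> Q \<Longrightarrow> card T \<le> card T'" unfolding cT c0_def by simp
    have T: "T \<in> rameaux a" "i \<in> T" using TQ by (auto simp: Q_def)
    have "of_nat (card T) * S (cls T i) = 0" using orthT[OF T] S0[OF T(1)] by simp
    hence Sc: "S (cls T i) = 0" using T(2) by auto
    have "\<not> card (cls T i) \<ge> 2"
    proof
      assume "card (cls T i) \<ge> 2"
      hence "cls T i \<in> Q" using cls_ram[OF T] cls_self[OF T(2)] by (simp add: Q_def)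
      moreover have "card (cls T i) < card T"
        using cls_psub[OF ram_card[OF T(1)] T(2)] by (simp add: psubset_card_mono)
      ultimately show False using cmin by fastforce
    qed
    hence "card (cls T i) \<le> Suc 0" by simp
    hence "cls T i = {i}" using cls_self[OF T(2)] by (auto simp: card_le_Suc0_iff_eq)
    thus ?thesis using Sc by (simp add: S_def)
  qed
  hence "u = 0" by (simp add: vec_eq_iff)
  thus False using u(2) by simp
qed

lemma main_loc:
  shows "(\<forall>u\<in>hypF. magic_matrix a *v u \<in> hypF)
       \<and> bij_betw (\<lambda>u. magic_matrix a *v u) hypF hypF
       \<and> {c. \<exists>u\<in>hypF. u \<noteq> 0 \<and> magic_matrix a *v u = c *s u}
           = (\<lambda>T1. of_rat (tree_value a T1)) ` rameaux a
       \<and> (\<forall>T1\<in>rameaux a. tree_value a T1 > 0)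
       \<and> ((\<forall>i. in_Cxx (a i)) \<longrightarrow> (\<forall>T1\<in>rameaux a. tree_value a T1 \<in> \<int>))"
proof -
  have E: "{c. \<exists>u\<in>hypF. u \<noteq> 0 \<and> magic_matrix a *v u = c *s u}
           = (\<lambda>T1. of_rat (tree_value a T1)) ` rameaux a"
  proof
    show "{c. \<exists>u\<in>hypF. u \<noteq> 0 \<and> magic_matrix a *v u = c *s u} \<subseteq> (\<lambda>T1. of_rat (tree_value a T1)) ` rameaux a"
      using eigen_sub by blast
  next
    show "(\<lambda>T1. of_rat (tree_value a T1)) ` rameaux a \<subseteq> {c. \<exists>u\<in>hypF. u \<noteq> 0 \<and> magic_matrix a *v u = c *s u}"
    proof
      fix c :: complex assume "c \<in> (\<lambda>T1. of_rat (tree_value a T1)) ` rameaux a"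
      then obtain T where T: "T \<in> rameaux a" and c: "c = of_rat (tree_value a T)" by blast
      obtain x where "x \<in> T" using ram_card[OF T] two_elems by blast
      thus "c \<in> {c. \<exists>u\<in>hypF. u \<noteq> 0 \<and> magic_matrix a *v u = c *s u}"
        using wv_props[OF T] c by blast
    qed
  qed
  have sub: "subspace (hypF :: (complex^'n) set)"
    unfolding hypF_def subspace_def by (auto simp: sum.distrib scaleR_sum_right[symmetric])
  have inj: "inj_on (\<lambda>u. magic_matrix a *v u) hypF"
  proof (rule inj_onI)
    fix u w assume uw: "u \<in> hypF" "w \<in> hypF" "magic_matrix a *v u = magic_matrix a *v w"
    show "u = w"
    proof (rule ccontr)
      assume "u \<noteq> w"
      hence "u - w \<noteq> 0" by simp
      moreover have "u - w \<in> hypF" using uw sub by (simp add: subspace_diff)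
      moreover have "magic_matrix a *v (u - w) = 0 *s (u - w)"
        using uw(3) by (simp add: matrix_vector_mult_diff_distrib)
      ultimately have "(0::complex) \<in> (\<lambda>T1. of_rat (tree_value a T1)) ` rameaux a"
        using E by blast
      then obtain T where "T \<in> rameaux a" "of_rat (tree_value a T) = (0::complex)" by auto
      thus False using tv_pos by fastforce
    qed
  qed
  have img: "(\<lambda>u. magic_matrix a *v u) ` hypF = hypF"
    by (rule lin_surj) (use sub inj M_hyp in auto)
  show ?thesis using E inj img M_hyp tv_pos tv_int by (simp add: bij_betw_def)
qed

end

theorem mainTheorem2:
  fixes a :: "'n::finite \<Rightarrow> puiseux"
  assumes n2: "CARD('n) \<ge> 2"
    and inK: "\<And>i. in_Kbar (a i)"
    and distinct: "inj a"
    and pos: "\<And>i. val_pos (a i)"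
  shows "(\<forall>u\<in>hypF. magic_matrix a *v u \<in> hypF)
       \<and> bij_betw (\<lambda>u. magic_matrix a *v u) hypF hypF
       \<and> {c. \<exists>u\<in>hypF. u \<noteq> 0 \<and> magic_matrix a *v u = c *s u}
           = (\<lambda>T1. of_rat (tree_value a T1)) ` rameaux a
       \<and> (\<forall>T1\<in>rameaux a. tree_value a T1 > 0)
       \<and> ((\<forall>i. in_Cxx (a i)) \<longrightarrow> (\<forall>T1\<in>rameaux a. tree_value a T1 \<in> \<int>))"
proof -
  interpret bouquet a using assms by unfold_locales
  show ?thesis by (rule main_loc)
qed

end
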